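(* For every nonnegative integer $r$, $$\int_0^{\frac{\pi}{2}}\sin^{2r}x\,\sin\frac{x}{2}\,\mathrm{d}x=\frac{16^r}{(4r+1)\binom{4r}{2r}}\left(2+\sqrt{2}\sum_{k=0}^r \frac{\binom{4k}{2k}}{(4k-1)16^k}\right).$$ *)

theory Defs
  imports "HOL-Analysis.Analysis"
begin

end

theory Submission
  imports Defs
begin

lemma poly_id:
  fixes s c S C p q kk :: real
  assumes "s^2 + c^2 = 1" "p = q * s"
  shows "(- ((2 * kk * (c * q) * s + c * p) * s * 2) - c * (p * s) * 2) * C +
     S * (p * (s * s)) +
     (((2 * kk * (c * q) * s + c * p) * (8 + 8 * kk) * c - s * ((8 + 8 * kk) * (p * s))) * S +
      2 * ((2 + 2 * kk) * (c * (s * (C * p))))) =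
     (1 - 4 * (2 + 2 * kk)^2) * (p * s * s * S) +
     (8 + 8 * kk) * (1 + 2 * kk) * (p * S)"
  using assms by algebra

lemma deriv_F:
  fixes k :: nat and x :: real
  defines "n \<equiv> 2*k+2"
  shows "((\<lambda>x. -2 * sin x ^ n * cos (x/2) + 4 * real n * sin x ^ (2*k+1) * cos x * sin (x/2))
     has_real_derivative
     ((1 - 4 * real n ^ 2) * (sin x ^ n * sin (x/2)) + 4 * real n * (real n - 1) * (sin x ^ (2*k) * sin (x/2)))) (at x)"
proof -
  have e: "\<And>x. sin x ^ n = sin x ^ (2*k) * sin x * sin x" "\<And>x. sin x ^ (2*k+1) = sin x ^ (2*k) * sin x"
    by (simp_all only: n_def power_add power2_eq_square mult.assoc power_one_right)
  have c: "sin x ^ 2 + cos x ^ 2 = 1" by simp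
  show ?thesis unfolding e
    apply (rule derivative_eq_intros refl | simp)+
    apply (simp add: n_def)
    apply (cases k)
     apply (simp add: algebra_simps power2_eq_square)
     apply (thin_tac "k = 0")
    using c apply algebra
    subgoal premises p for m
    proof -
      have h: "sin x^(2*k) = sin x^(2*k - Suc 0) * sin x" using p by (simp add: power_Suc2[symmetric])
      show ?thesis by (rule poly_id[OF c h])
    qed
    done
qed

definition II :: "nat \<Rightarrow> real" where
  "II m = integral {0..pi/2} (\<lambda>x::real. sin x ^ m * sin (x/2))"

lemma II_has: "((\<lambda>x::real. sin x ^ m * sin (x/2)) has_integral II m) {0..pi/2}"
  unfolding II_def
  by (intro integrable_integral integrable_continuous_interval continuous_intros) auto

lemma II_rec:
  fixes k :: nat
  defines "n \<equiv> 2*k+2"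
  shows "(1 - 4 * real n ^ 2) * II n + 4 * real n * (real n - 1) * II (2*k) = - sqrt 2"
proof -
  define F where "F = (\<lambda>x::real. -2 * sin x ^ n * cos (x/2) + 4 * real n * sin x ^ (2*k+1) * cos x * sin (x/2))"
  have "((\<lambda>x. (1 - 4 * real n ^ 2) * (sin x ^ n * sin (x/2)) + 4 * real n * (real n - 1) * (sin x ^ (2*k) * sin (x/2)))
      has_integral F (pi/2) - F 0) {0..pi/2}"
  proof (rule fundamental_theorem_of_calculus)
    show "0 \<le> pi/2" by simp
    fix x :: real
    have "(F has_real_derivative (1 - 4 * real n ^ 2) * (sin x ^ n * sin (x/2)) + 4 * real n * (real n - 1) * (sin x ^ (2*k) * sin (x/2))) (at x)"
      unfolding F_def n_def by (rule deriv_F)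
    then show "(F has_vector_derivative (1 - 4 * real n ^ 2) * (sin x ^ n * sin (x/2)) + 4 * real n * (real n - 1) * (sin x ^ (2*k) * sin (x/2))) (at x within {0..pi/2})"
      using has_field_derivative_at_within has_real_derivative_iff_has_vector_derivative by blast
  qed
  moreover have "((\<lambda>x. (1 - 4 * real n ^ 2) * (sin x ^ n * sin (x/2)) + 4 * real n * (real n - 1) * (sin x ^ (2*k) * sin (x/2)))
      has_integral (1 - 4 * real n ^ 2) * II n + 4 * real n * (real n - 1) * II (2*k)) {0..pi/2}"
    by (intro has_integral_add has_integral_mult_right II_has)
  moreover have "F (pi/2) - F 0 = - sqrt 2"
    by (simp add: F_def n_def cos_45)
  ultimately show ?thesis using has_integral_unique by simp
qed

lemma binom_aux:
  fixes Q x y a b :: real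
  assumes "a \<noteq> 0" "b \<noteq> 0" "y \<noteq> 0"
  shows "Q * x / ((a * b * y) * (a * b * y)) = x / (y * y) * Q / (a^2 * b^2)"
  using assms by (simp add: field_simps power2_eq_square)

lemma binom_rec:
  "real ((4*(Suc r)) choose (2*(Suc r))) =
     real ((4*r) choose (2*r)) * ((4*real r+4)*(4*real r+3)*(4*real r+2)*(4*real r+1)) / ((2*real r+2)^2*(2*real r+1)^2)"
proof -
  have m1: "4*Suc r - 2*Suc r = 2*Suc r" "4*r - 2*r = 2*r" by simp_all
  have b1: "real ((4*(Suc r)) choose (2*(Suc r))) = fact (4*Suc r) / (fact (2*Suc r) * fact (2*Suc r))"
    using binomial_fact[where 'a=real, of "2*Suc r" "4*Suc r"] unfolding m1 by simp
  have b2: "real ((4*r) choose (2*r)) = fact (4*r) / (fact (2*r) * fact (2*r))"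
    using binomial_fact[where 'a=real, of "2*r" "4*r"] unfolding m1 by simp
  have s4: "4*Suc r = Suc(Suc(Suc(Suc(4*r))))" and s2: "2*Suc r = Suc(Suc(2*r))" by simp_all
  have f1: "(fact (4*Suc r)::real) = ((4*real r+4)*(4*real r+3)*(4*real r+2)*(4*real r+1)) * fact (4*r)"
    unfolding s4 fact_Suc by (simp add: algebra_simps)
  have f2: "(fact (2*Suc r)::real) = (2*real r+2)*(2*real r+1) * fact (2*r)"
    unfolding s2 fact_Suc by (simp add: algebra_simps)
  have nz: "(2*real r+2) \<noteq> 0" "(2*real r+1) \<noteq> 0" "(fact (2*r)::real) \<noteq> 0"
    by (simp_all add: add_nonneg_eq_0_iff)
  show ?thesis unfolding b1 b2 f1 f2 by (rule binom_aux[OF nz])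
qed

lemma alg0:
  fixes a b c P Q R A s :: real
  assumes "a \<noteq> 0" "b \<noteq> 0" "c \<noteq> 0" "P \<noteq> 0" "Q \<noteq> 0" "R \<noteq> 0"
  shows "(16*P)/(a * (c*Q/R)) * (2 + s*(A + (c*Q/R)/(b*(16*P)))) = (16*P*R)/(a * c*Q) * (2 + s*A) + s/(a*b)"
  using assms by (simp add: field_simps)

lemma alg:
  fixes t c P A s :: real
  assumes t: "t \<ge> 0" and c: "c > 0" and P: "P > 0"
  defines "Q \<equiv> (4*t+4)*(4*t+3)*(4*t+2)*(4*t+1)" and "R \<equiv> (2*t+2)^2*(2*t+1)^2"
  shows "(4*(2*t+2)*(2*t+1)*(P/((4*t+1)*c)*(2+s*A)) + s) / (4*(2*t+2)^2-1)
     = (16*P)/((4*(t+1)+1) * (c*Q/R)) * (2 + s*(A + (c*Q/R)/((4*(t+1)-1)*(16*P))))"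
proof -
  have Q: "Q > 0" unfolding Q_def using t by (intro mult_pos_pos) auto
  have R: "R > 0" unfolding R_def using t by (intro mult_pos_pos) auto
  have d1: "4*(2*t+2)^2-1 = (4*(t+1)+1)*(4*(t+1)-1)" by (simp add: power2_eq_square algebra_simps)
  have e0: "(16*P*R)/((4*(t+1)+1) * c*Q) = 4*(2*t+2)*(2*t+1)*P/((4*t+1)*c * ((4*(t+1)+1)*(4*(t+1)-1)))"
  proof (subst frac_eq_eq)
    show "(4*(t+1)+1) * c*Q \<noteq> 0" using Q c t by (intro mult_pos_pos[THEN less_imp_neq, symmetric]) auto
    show "(4*t+1)*c * ((4*(t+1)+1)*(4*(t+1)-1)) \<noteq> 0" using c t by (intro mult_pos_pos[THEN less_imp_neq, symmetric]) auto
    show "16 * P * R * ((4 * t + 1) * c * ((4 * (t + 1) + 1) * (4 * (t + 1) - 1))) =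
    4 * (2 * t + 2) * (2 * t + 1) * P * ((4 * (t + 1) + 1) * c * Q)"
      unfolding Q_def R_def by (simp add: algebra_simps power2_eq_square)
  qed
  have e: "(16*P*R)/((4*(t+1)+1) * c*Q) = 4*(2*t+2)*(2*t+1)*P/((4*t+1)*c) / ((4*(t+1)+1)*(4*(t+1)-1))"
    unfolding e0 by (simp add: divide_divide_eq_left)
  have r: "(16*P)/((4*(t+1)+1) * (c*Q/R)) * (2 + s*(A + (c*Q/R)/((4*(t+1)-1)*(16*P))))
     = (16*P*R)/((4*(t+1)+1) * c*Q) * (2 + s*A) + s/((4*(t+1)+1)*(4*(t+1)-1))"
    by (rule alg0) (use t c P Q R in auto)
  show ?thesis unfolding d1 r e
    by (simp add: add_divide_distrib)
qed
lemma II0: "II 0 = 2 - sqrt 2"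
proof -
  have "((\<lambda>x::real. sin x ^ 0 * sin (x/2)) has_integral ((\<lambda>x. -2 * cos (x/2)) (pi/2) - (\<lambda>x. -2 * cos (x/2)) 0)) {0..pi/2}"
    apply (rule fundamental_theorem_of_calculus)
     apply simp
  proof -
    fix x :: real
    have "((\<lambda>x. -2 * cos (x/2)) has_real_derivative sin x ^ 0 * sin (x/2)) (at x)"
      by (rule derivative_eq_intros refl | simp)+
    then show "((\<lambda>x. -2 * cos (x/2)) has_vector_derivative sin x ^ 0 * sin (x/2)) (at x within {0..pi/2})"
      using has_field_derivative_at_within has_real_derivative_iff_has_vector_derivative by blast
  qed
  from has_integral_unique[OF II_has[of 0] this] have "II 0 = -2 * cos (pi/4) + 2" by simp
  then show ?thesis by (simp add: cos_45)
qed

theorem proposition4p0p1: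
  fixes r :: nat
  shows "integral {0..pi/2} (\<lambda>x::real. sin x ^ (2*r) * sin (x/2)) =
    16 ^ r / ((4 * real r + 1) * real ((4*r) choose (2*r))) *
    (2 + sqrt 2 * (\<Sum>k=0..r. real ((4*k) choose (2*k)) / ((4 * real k - 1) * 16 ^ k)))"
proof -
  have "II (2*r) = 16 ^ r / ((4 * real r + 1) * real ((4*r) choose (2*r))) *
    (2 + sqrt 2 * (\<Sum>k=0..r. real ((4*k) choose (2*k)) / ((4 * real k - 1) * 16 ^ k)))"
  proof (induction r)
    case 0
    then show ?case by (simp add: II0)
  next
    case (Suc r)
    define c where "c = real ((4*r) choose (2*r))"
    define A where "A = (\<Sum>k=0..r. real ((4*k) choose (2*k)) / ((4 * real k - 1) * 16 ^ k))"
    have cpos: "c > 0" unfolding c_def by simp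
    have rec: "(1 - 4 * (2*real r+2) ^ 2) * II (2*Suc r) + 4 * (2*real r+2) * (2*real r+1) * II (2*r) = - sqrt 2"
      using II_rec[of r] by (simp add: algebra_simps)
    have IH: "II (2*r) = 16 ^ r / ((4 * real r + 1) * c) * (2 + sqrt 2 * A)"
      using Suc.IH unfolding c_def A_def .
    have S: "(\<Sum>k=0..Suc r. real ((4*k) choose (2*k)) / ((4 * real k - 1) * 16 ^ k))
       = A + real ((4*Suc r) choose (2*Suc r)) / ((4 * real (Suc r) - 1) * 16 ^ Suc r)"
      unfolding A_def by simp
    have B: "real ((4*Suc r) choose (2*Suc r)) = c * ((4*real r+4)*(4*real r+3)*(4*real r+2)*(4*real r+1)) / ((2*real r+2)^2*(2*real r+1)^2)"
      unfolding c_def by (rule binom_rec)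
    have "(2*real r+2)^2 \<ge> 2^2" by (rule power_mono) auto
    then have "(2*real r+2)^2 \<ge> 4" by simp
    then have d: "(4 * (2*real r+2) ^ 2 - 1) \<noteq> 0" by linarith
    have I2: "II (2*Suc r) = (4 * (2*real r+2) * (2*real r+1) * II (2*r) + sqrt 2) / (4 * (2*real r+2) ^ 2 - 1)"
      using rec d by (simp add: field_simps)
    have t1: "real (Suc r) = real r + 1" "(16::real) ^ Suc r = 16 * 16 ^ r" by simp_all
    show ?case unfolding S B I2 IH t1
      by (rule alg) (use cpos in auto)
  qed
  then show ?thesis unfolding II_def .
qed

end
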